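(* Let $T$ be a subcubic tree of order $n$ and dissociation number $\psi$. If $\psi=\frac{4n+2}{5}$, then $T$ has exactly one maximum dissociation set, i.e., $\Phi(T)=1$.
   Context: All graphs are finite, simple and undirected. A subcubic tree is a tree of maximum degree at most $3$. A dissociation set in a graph $G$ is a vertex subset $F$ such that the induced subgraph $G[F]$ has maximum degree at most $1$; a maximum dissociation set is one of maximum cardinality, and the dissociation number $\psi(G)$ is that cardinality. $\Phi(G)$ denotes the number of maximum dissociation sets of $G$. *)

theory Defs
  imports Main
begin

definition graph :: "'a set \<Rightarrow> 'a set set \<Rightarrow> bool" where
  "graph V E \<longleftrightarrow> finite V \<and> (\<forall>e\<in>E. e \<subseteq> V \<and> card e = 2)"

definition adj :: "'a set set \<Rightarrow> 'a \<Rightarrow> 'a \<Rightarrow> bool" where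
  "adj E u v \<longleftrightarrow> {u, v} \<in> E"

definition degree :: "'a set set \<Rightarrow> 'a \<Rightarrow> nat" where
  "degree E v = card {u. adj E v u}"

definition walk :: "'a set set \<Rightarrow> 'a list \<Rightarrow> bool" where
  "walk E xs \<longleftrightarrow> xs \<noteq> [] \<and> (\<forall>i. Suc i < length xs \<longrightarrow> adj E (xs ! i) (xs ! Suc i))"

definition connected_graph :: "'a set \<Rightarrow> 'a set set \<Rightarrow> bool" where
  "connected_graph V E \<longleftrightarrow> V \<noteq> {} \<and>
     (\<forall>u\<in>V. \<forall>v\<in>V. \<exists>xs. walk E xs \<and> hd xs = u \<and> last xs = v)"

definition is_cycle :: "'a set set \<Rightarrow> 'a list \<Rightarrow> bool" where
  "is_cycle E xs \<longleftrightarrow> length xs \<ge> 3 \<and> distinct xs \<and> walk E xs \<and> adj E (last xs) (hd xs)"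

definition tree :: "'a set \<Rightarrow> 'a set set \<Rightarrow> bool" where
  "tree V E \<longleftrightarrow> graph V E \<and> connected_graph V E \<and> \<not> (\<exists>xs. is_cycle E xs)"

definition subcubic_tree :: "'a set \<Rightarrow> 'a set set \<Rightarrow> bool" where
  "subcubic_tree V E \<longleftrightarrow> tree V E \<and> (\<forall>v\<in>V. degree E v \<le> 3)"

definition dissociation_set :: "'a set \<Rightarrow> 'a set set \<Rightarrow> 'a set \<Rightarrow> bool" where
  "dissociation_set V E F \<longleftrightarrow> F \<subseteq> V \<and>
     (\<forall>v\<in>F. card {u\<in>F. adj E v u} \<le> 1)"

definition dissociation_number :: "'a set \<Rightarrow> 'a set set \<Rightarrow> nat" where
  "dissociation_number V E = Max (card ` {F. dissociation_set V E F})"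

definition max_dissociation_set :: "'a set \<Rightarrow> 'a set set \<Rightarrow> 'a set \<Rightarrow> bool" where
  "max_dissociation_set V E F \<longleftrightarrow> dissociation_set V E F \<and>
     card F = dissociation_number V E"

definition num_max_dissociation_sets :: "'a set \<Rightarrow> 'a set set \<Rightarrow> nat" where
  "num_max_dissociation_sets V E = card {F. max_dissociation_set V E F}"

end

theory Submission
  imports Defs
begin

lemma adj_sym: "adj E u v = adj E v u" by (simp add: adj_def insert_commute)

lemma adj_irrefl: "graph V E \<Longrightarrow> \<not> adj E v v"
  unfolding graph_def adj_def by fastforce

lemma adj_in: "graph V E \<Longrightarrow> adj E u v \<Longrightarrow> u \<in> V \<and> v \<in> V"
  unfolding graph_def adj_def by blast

lemma finE: "graph V E \<Longrightarrow> finite E"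
  unfolding graph_def by (meson PowI finite_Pow_iff finite_subset subsetI)

lemma inc_le:
  assumes "graph V E"
  shows "card {e\<in>E. v\<in>e \<and> e\<subseteq>B} \<le> card {u\<in>B. adj E v u}"
proof -
  have "{e\<in>E. v\<in>e \<and> e\<subseteq>B} \<subseteq> (\<lambda>u. {v,u}) ` {u\<in>B. adj E v u}"
  proof
    fix e assume e: "e \<in> {e\<in>E. v\<in>e \<and> e\<subseteq>B}"
    then have "card e = 2" using assms unfolding graph_def by auto
    then obtain a b where ab: "e = {a,b}" "a \<noteq> b" by (auto simp: card_2_iff)
    then obtain u where "e = {v,u}" using e by auto
    then show "e \<in> (\<lambda>u. {v,u}) ` {u\<in>B. adj E v u}" using e by (auto simp: adj_def)
  qed
  moreover have "finite {u\<in>B. adj E v u}"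
    using adj_in[OF assms] assms unfolding graph_def
    by (metis (no_types, lifting) mem_Collect_eq rev_finite_subset subsetI)
  ultimately show ?thesis
    by (meson card_image_le card_mono finite_imageI order_trans)
qed

lemma double_count:
  assumes "finite A" "finite X"
  shows "(\<Sum>v\<in>A. card {e\<in>X. v\<in>e}) = (\<Sum>e\<in>X. card (e\<inter>A))"
proof -
  have 1: "card {e\<in>X. v\<in>e} = (\<Sum>e\<in>X. if v\<in>e then 1 else 0)" for v
    using sum.inter_filter[OF assms(2), of "\<lambda>_. 1::nat" "\<lambda>e. v\<in>e"] by simp
  have 2: "card (e\<inter>A) = (\<Sum>v\<in>A. if v\<in>e then 1 else 0)" for e
  proof -
    have "e \<inter> A = {v\<in>A. v\<in>e}" by auto
    then show ?thesis using sum.inter_filter[OF assms(1), of "\<lambda>_. 1::nat" "\<lambda>v. v\<in>e"] by simp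
  qed
  show ?thesis unfolding 1 2 by (rule sum.swap)
qed

lemma walk_Cons: "xs \<noteq> [] \<Longrightarrow> walk E (u#xs) \<longleftrightarrow> adj E u (hd xs) \<and> walk E xs"
  unfolding walk_def
  apply (cases xs; simp)
  apply (intro iffI conjI allI impI)
    apply (metis Suc_mono length_Cons nth_Cons_0 nth_Cons_Suc zero_less_Suc)
   apply (metis Suc_mono length_Cons nth_Cons_Suc)
  subgoal for a list i by (cases i) auto
  done

lemma walk_take: "walk E xs \<Longrightarrow> 0 < k \<Longrightarrow> walk E (take k xs)"
  unfolding walk_def by auto

lemma walk_butlast: assumes "walk E xs" "2 \<le> length xs" shows "walk E (butlast xs)"
proof -
  have "butlast xs \<noteq> []" using \<open>2 \<le> length xs\<close>
    by (metis length_butlast list.size(3) Suc_1 diff_Suc_1 not_less_eq_eq diff_is_0_eq)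
  then show ?thesis using \<open>walk E xs\<close> unfolding walk_def by (auto simp: nth_butlast)
qed

lemma conn_edges:
  assumes g: "graph V E" and c: "connected_graph V E"
  shows "card V \<le> card E + 1"
proof -
  obtain r where r: "r \<in> V" using c unfolding connected_graph_def by auto
  define d where "d v = (LEAST k. \<exists>xs. walk E xs \<and> hd xs = r \<and> last xs = v \<and> length xs = k)" for v
  have par: "\<exists>u. adj E v u \<and> d u < d v" if v: "v \<in> V" "v \<noteq> r" for v
  proof -
    obtain xs0 where "walk E xs0" "hd xs0 = r" "last xs0 = v"
      using c v r unfolding connected_graph_def by blast
    then have "\<exists>k xs. walk E xs \<and> hd xs = r \<and> last xs = v \<and> length xs = k" by blast
    then have "\<exists>xs. walk E xs \<and> hd xs = r \<and> last xs = v \<and> length xs = d v"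
      unfolding d_def by (rule LeastI_ex)
    then obtain xs where xs: "walk E xs" "hd xs = r" "last xs = v" "length xs = d v"
      by blast
    have ne: "xs \<noteq> []" using xs(1) unfolding walk_def by auto
    have len: "2 \<le> length xs"
    proof (rule ccontr)
      assume "\<not> 2 \<le> length xs"
      then have "length xs = 1" using ne by (cases xs) (auto simp: Suc_le_eq)
      then have "hd xs = last xs" by (cases xs) auto
      then show False using xs v by auto
    qed
    define ys where "ys = butlast xs"
    have ysw: "walk E ys" unfolding ys_def using walk_butlast[OF xs(1) len] .
    obtain a b zs where abz: "xs = a#b#zs" using len
      by (metis One_nat_def Suc_1 length_Cons list.size(3) neq_Nil_conv not_less_eq_eq zero_le)
    have ysh: "hd ys = r" unfolding ys_def using xs(2) abz by simp
    have ysne: "ys \<noteq> []" unfolding ys_def using abz by simp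
    have ysl: "last ys = xs ! (length xs - 2)" unfolding ys_def using len ysne[unfolded ys_def]
      by (simp add: last_conv_nth nth_butlast numeral_2_eq_2)
    have "adj E (xs ! (length xs - 2)) (xs ! Suc (length xs - 2))"
      using xs(1) len unfolding walk_def by auto
    moreover have "Suc (length xs - 2) = length xs - 1" using len by auto
    ultimately have a: "adj E (last ys) v" using ysl xs(3) ne by (simp add: last_conv_nth)
    have "d (last ys) \<le> length ys" unfolding d_def
      by (rule Least_le) (use ysw ysh in blast)
    moreover have "length ys < d v" unfolding ys_def using xs(4) len by auto
    ultimately show ?thesis using a adj_sym by (metis le_less_trans)
  qed
  define p where "p v = (SOME u. adj E v u \<and> d u < d v)" for v
  have pp: "adj E v (p v) \<and> d (p v) < d v" if "v \<in> V - {r}" for v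
    unfolding p_def using par that by (metis (no_types, lifting) DiffE insertI1 someI_ex)
  have inj: "inj_on (\<lambda>v. {v, p v}) (V - {r})"
  proof
    fix v w assume v: "v \<in> V - {r}" and w: "w \<in> V - {r}" and eq: "{v, p v} = {w, p w}"
    show "v = w"
    proof (rule ccontr)
      assume "v \<noteq> w"
      then have "v = p w" "w = p v" using eq by (auto simp: doubleton_eq_iff)
      then show False using pp[OF v] pp[OF w] by auto
    qed
  qed
  have "(\<lambda>v. {v, p v}) ` (V - {r}) \<subseteq> E" using pp unfolding adj_def by auto
  then have "card (V - {r}) \<le> card E"
    using inj finE[OF g] by (metis card_image card_mono)
  then show ?thesis using r by auto
qed

lemma cycle_exists:
  assumes g: "graph V E" and fin: "finite A" and ne: "A \<noteq> {}"
    and deg: "\<forall>v\<in>A. \<exists>u1 u2. u1 \<noteq> u2 \<and> u1 \<in> A \<and> u2 \<in> A \<and> adj E v u1 \<and> adj E v u2"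
  shows "\<exists>xs. is_cycle E xs"
proof -
  define P where "P k = (\<exists>xs. walk E xs \<and> distinct xs \<and> set xs \<subseteq> A \<and> length xs = k)" for k
  obtain a where a: "a \<in> A" using ne by auto
  have P1: "P 1" unfolding P_def using a by (intro exI[of _ "[a]"]) (auto simp: walk_def)
  have bnd: "\<forall>y. P y \<longrightarrow> y \<le> card A"
    unfolding P_def using fin by (metis card_mono distinct_card)
  obtain k where k: "P k" "\<forall>y. P y \<longrightarrow> y \<le> k" using Nat.ex_has_greatest_nat[OF P1 bnd] by blast
  then obtain xs where xs: "walk E xs" "distinct xs" "set xs \<subseteq> A" "length xs = k"
    unfolding P_def by blast
  have xne: "xs \<noteq> []" using xs(1) unfolding walk_def by auto
  define x where "x = hd xs"
  have xA: "x \<in> A" using xs(3) xne unfolding x_def by auto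
  have closed: "u \<in> set xs" if "u \<in> A" "adj E x u" for u
  proof (rule ccontr)
    assume nu: "u \<notin> set xs"
    have "walk E (u#xs)" using walk_Cons[OF xne] xs(1) that(2) adj_sym unfolding x_def by metis
    then have "P (Suc k)" unfolding P_def using nu xs that(1) by (intro exI[of _ "u#xs"]) auto
    then show False using k(2) by auto
  qed
  obtain u1 u2 where u: "u1 \<noteq> u2" "u1 \<in> A" "u2 \<in> A" "adj E x u1" "adj E x u2"
    using deg xA by blast
  have x0: "xs ! 0 = x" unfolding x_def using xne by (simp add: hd_conv_nth)
  show ?thesis
  proof (cases "length xs = 1")
    case True
    then have "set xs = {x}" using xne unfolding x_def by (cases xs) auto
    then have "u1 = x" using closed u by auto
    then show ?thesis using u(4) adj_irrefl[OF g] by auto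
  next
    case False
    then have len2: "2 \<le> length xs" using xne by (cases xs) (auto simp: Suc_le_eq)
    obtain w where w: "w \<in> A" "adj E x w" "w \<noteq> xs ! 1" using u by metis
    have "w \<in> set xs" using closed w by auto
    then obtain i where i: "i < length xs" "xs ! i = w" by (auto simp: in_set_conv_nth)
    have "i \<noteq> 0" using i x0 w(2) adj_irrefl[OF g] by metis
    moreover have "i \<noteq> 1" using i w by auto
    ultimately have i2: "2 \<le> i" by auto
    define cs where "cs = take (Suc i) xs"
    have "is_cycle E cs" unfolding is_cycle_def
    proof (intro conjI)
      show "3 \<le> length cs" unfolding cs_def using i i2 by auto
      show "distinct cs" unfolding cs_def using xs(2) by simp
      show "walk E cs" unfolding cs_def using walk_take[OF xs(1)] by simp
      have "last cs = w" unfolding cs_def using i by (simp add: take_Suc_conv_app_nth)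
      moreover have "hd cs = x" unfolding cs_def x_def using xne by simp
      ultimately show "adj E (last cs) (hd cs)" using w(2) adj_sym by metis
    qed
    then show ?thesis by blast
  qed
qed

lemma inc_deg:
  assumes g: "graph V E" shows "card {e\<in>E. v\<in>e} \<le> degree E v"
proof -
  have "{e\<in>E. v\<in>e} = {e\<in>E. v\<in>e \<and> e\<subseteq>V}" using g unfolding graph_def by auto
  moreover have "{u\<in>V. adj E v u} = {u. adj E v u}" using adj_in[OF g] by auto
  ultimately show ?thesis using inc_le[OF g, of v V] unfolding degree_def by simp
qed

lemma tight_structure:
  assumes g: "graph V E" and cE: "card V \<le> card E + 1"
    and degs: "\<forall>v\<in>V. degree E v \<le> 3" and F: "dissociation_set V E F"
    and eq: "5 * card F = 4 * card V + 2"
  shows "(\<forall>v\<in>V-F. degree E v = 3) \<and> (\<forall>u\<in>V-F. \<forall>v\<in>V-F. \<not> adj E u v)"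
proof -
  define S where "S = V - F"
  have finV: "finite V" using g unfolding graph_def by auto
  have FV: "F \<subseteq> V" using F unfolding dissociation_set_def by auto
  have finF: "finite F" using finV FV finite_subset by blast
  have finS: "finite S" unfolding S_def using finV by auto
  have finE': "finite E" using finE[OF g] .
  have cV: "card V = card F + card S" unfolding S_def using finV FV
    by (metis card_Diff_subset card_mono le_add_diff_inverse finite_subset)
  define EF where "EF = {e\<in>E. e\<subseteq>F}"
  define ES where "ES = {e\<in>E. e\<inter>S \<noteq> {}}"
  have EU: "E = EF \<union> ES" unfolding EF_def ES_def S_def using g unfolding graph_def by blast
  have ED: "EF \<inter> ES = {}" unfolding EF_def ES_def S_def by blast
  have finEF: "finite EF" "finite ES" unfolding EF_def ES_def using finE' by auto
  have cE2: "card E = card EF + card ES" using EU ED finEF card_Un_disjoint by metis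
  have h1: "2 * card EF \<le> card F"
  proof -
    have "(\<Sum>v\<in>F. card {e\<in>EF. v\<in>e}) = (\<Sum>e\<in>EF. card (e\<inter>F))"
      using double_count[OF finF finEF(1)] .
    also have "\<dots> = (\<Sum>e\<in>EF. 2)"
      using g unfolding EF_def graph_def by (intro sum.cong) (auto simp: Int_absorb2)
    also have "\<dots> = 2 * card EF" by simp
    finally have a: "(\<Sum>v\<in>F. card {e\<in>EF. v\<in>e}) = 2 * card EF" .
    have "card {e\<in>EF. v\<in>e} \<le> 1" if "v \<in> F" for v
    proof -
      have "{e\<in>EF. v\<in>e} = {e\<in>E. v\<in>e \<and> e\<subseteq>F}" unfolding EF_def by auto
      then have "card {e\<in>EF. v\<in>e} \<le> card {u\<in>F. adj E v u}" using inc_le[OF g, of v F] by simp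
      also have "\<dots> \<le> 1" using F that unfolding dissociation_set_def by auto
      finally show ?thesis .
    qed
    then have "(\<Sum>v\<in>F. card {e\<in>EF. v\<in>e}) \<le> (\<Sum>v\<in>F. 1)" by (intro sum_mono) auto
    then show ?thesis using a by simp
  qed
  define T where "T = (\<Sum>e\<in>E. card (e\<inter>S))"
  have T2: "T = (\<Sum>v\<in>S. card {e\<in>E. v\<in>e})" unfolding T_def using double_count[OF finS finE'] by simp
  have degS: "card {e\<in>E. v\<in>e} \<le> 3" if "v \<in> S" for v
    using inc_deg[OF g, of v] degs that unfolding S_def by force
  have hT1: "T \<le> 3 * card S"
  proof -
    have "T \<le> (\<Sum>v\<in>S. 3)" unfolding T2 using degS by (intro sum_mono) auto
    then show ?thesis by simp
  qed
  have TES: "(\<Sum>e\<in>ES. card (e\<inter>S)) \<le> T" unfolding T_def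
    using finE' EU by (intro sum_mono2) auto
  have pos: "\<forall>e\<in>ES. 1 \<le> card (e\<inter>S)" unfolding ES_def
  proof
    fix e assume "e \<in> {e\<in>E. e\<inter>S \<noteq> {}}"
    then have "e \<inter> S \<noteq> {}" by auto
    moreover have "finite (e \<inter> S)" using finS by auto
    ultimately show "1 \<le> card (e\<inter>S)" by (simp add: Suc_le_eq card_gt_0_iff)
  qed
  have hT2: "card ES \<le> T"
  proof -
    have "(\<Sum>e\<in>ES. 1) \<le> (\<Sum>e\<in>ES. card (e\<inter>S))" using pos by (intro sum_mono) auto
    then show ?thesis using TES by simp
  qed
  have indep: "\<forall>u\<in>S. \<forall>v\<in>S. \<not> adj E u v"
  proof (intro ballI notI)
    fix u v assume u: "u \<in> S" and v: "v \<in> S" and a: "adj E u v"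
    have e0: "{u,v} \<in> ES" using a u unfolding adj_def ES_def by auto
    have "u \<noteq> v" using a adj_irrefl[OF g] by auto
    then have "card ({u,v} \<inter> S) = 2" using u v by auto
    then have "(\<Sum>e\<in>ES. 1) < (\<Sum>e\<in>ES. card (e\<inter>S))"
      using pos e0 finEF(2) by (intro sum_strict_mono_ex1) (auto intro!: bexI[of _ "{u,v}"])
    then have "card ES + 1 \<le> T" using TES by simp
    then show False using cE cE2 h1 hT1 cV eq by linarith
  qed
  have deg3: "\<forall>v\<in>S. degree E v = 3"
  proof (rule ccontr)
    assume "\<not> (\<forall>v\<in>S. degree E v = 3)"
    then obtain v0 where v0: "v0 \<in> S" "degree E v0 \<noteq> 3" by blast
    then have "degree E v0 < 3" using degs unfolding S_def by force
    then have "card {e\<in>E. v0\<in>e} < 3" using inc_deg[OF g, of v0] by linarith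
    then have "T < (\<Sum>v\<in>S. 3)" unfolding T2 using degS v0 finS
      by (intro sum_strict_mono_ex1) auto
    then have "T + 1 \<le> 3 * card S" by simp
    then show False using cE cE2 h1 hT2 cV eq by linarith
  qed
  show ?thesis using indep deg3 unfolding S_def by blast
qed

lemma two_elems: assumes "2 \<le> card X" shows "\<exists>a b. a \<in> X \<and> b \<in> X \<and> a \<noteq> b"
proof -
  have fin: "finite X" using assms by (metis card.infinite not_numeral_le_zero)
  have "X \<noteq> {}" using assms by auto
  then obtain a where a: "a \<in> X" by auto
  then have "card (X - {a}) \<ge> 1" using assms fin by auto
  then have "X - {a} \<noteq> {}" by (metis card.empty not_one_le_zero)
  then obtain b where "b \<in> X - {a}" by auto
  then show ?thesis using a by auto
qed

lemma cross:
  assumes g: "graph V E"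
    and sa: "(\<forall>v\<in>V-Fa. degree E v = 3) \<and> (\<forall>u\<in>V-Fa. \<forall>v\<in>V-Fa. \<not> adj E u v)"
    and Fb: "dissociation_set V E Fb"
    and v: "v \<in> (V-Fa) - (V-Fb)"
  shows "\<exists>u1 u2. u1 \<noteq> u2 \<and> u1 \<in> (V-Fb) - (V-Fa) \<and> u2 \<in> (V-Fb) - (V-Fa) \<and> adj E v u1 \<and> adj E v u2"
proof -
  define N where "N = {u. adj E v u}"
  have cN: "card N = 3" using sa v unfolding N_def degree_def by auto
  have finN: "finite N" using cN by (metis card.infinite zero_neq_numeral)
  have vFb: "v \<in> Fb" using v by auto
  have "card (N \<inter> Fb) \<le> 1"
  proof -
    have "N \<inter> Fb = {u\<in>Fb. adj E v u}" unfolding N_def by auto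
    then show ?thesis using Fb vFb unfolding dissociation_set_def by auto
  qed
  moreover have "card N = card (N \<inter> Fb) + card (N - Fb)" using finN by (rule card_Int_Diff)
  ultimately have "2 \<le> card (N - Fb)" using cN by linarith
  then obtain u1 u2 where u: "u1 \<in> N - Fb" "u2 \<in> N - Fb" "u1 \<noteq> u2" using two_elems by blast
  have good: "u \<in> (V-Fb) - (V-Fa) \<and> adj E v u" if "u \<in> N - Fb" for u
  proof -
    have a: "adj E v u" using that unfolding N_def by auto
    have "u \<in> V" using adj_in[OF g a] by auto
    moreover have "u \<notin> V - Fa" using sa v a by auto
    ultimately show ?thesis using that a by auto
  qed
  show ?thesis using good[OF u(1)] good[OF u(2)] u(3) by blast
qed

theorem corollary3p3:
  fixes V :: "'a set" and E :: "'a set set"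
  assumes "subcubic_tree V E"
    and "5 * dissociation_number V E = 4 * card V + 2"
  shows "num_max_dissociation_sets V E = 1"
proof -
  have g: "graph V E" and c: "connected_graph V E" and nc: "\<not> (\<exists>xs. is_cycle E xs)"
    and degs: "\<forall>v\<in>V. degree E v \<le> 3"
    using assms(1) unfolding subcubic_tree_def tree_def by auto
  have cE: "card V \<le> card E + 1" using conn_edges[OF g c] .
  have finV: "finite V" using g unfolding graph_def by auto
  define D where "D = {F. dissociation_set V E F}"
  have "D \<subseteq> Pow V" unfolding D_def dissociation_set_def by auto
  then have finD: "finite D" using finV finite_subset by blast
  have eD: "{} \<in> D" unfolding D_def dissociation_set_def by auto
  have st: "(\<forall>v\<in>V-F. degree E v = 3) \<and> (\<forall>u\<in>V-F. \<forall>v\<in>V-F. \<not> adj E u v)"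
    if "max_dissociation_set V E F" for F
    using tight_structure[OF g cE degs] that assms(2) unfolding max_dissociation_set_def by auto
  have "Max (card ` D) \<in> card ` D" using finD eD by (intro Max_in) auto
  then obtain F0 where F0: "F0 \<in> D" "card F0 = Max (card ` D)" by auto
  have mF0: "max_dissociation_set V E F0" using F0
    unfolding max_dissociation_set_def dissociation_number_def D_def by auto
  have uniq: "F1 = F2" if m1: "max_dissociation_set V E F1" and m2: "max_dissociation_set V E F2" for F1 F2
  proof (rule ccontr)
    assume ne: "F1 \<noteq> F2"
    have d1: "dissociation_set V E F1" and d2: "dissociation_set V E F2"
      using m1 m2 unfolding max_dissociation_set_def by auto
    have F1V: "F1 \<subseteq> V" and F2V: "F2 \<subseteq> V" using d1 d2 unfolding dissociation_set_def by auto
    define A where "A = ((V-F1) - (V-F2)) \<union> ((V-F2) - (V-F1))"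
    have "A \<noteq> {}"
    proof
      assume "A = {}"
      then have "V - F1 = V - F2" unfolding A_def by auto
      moreover have "F1 = V - (V - F1)" "F2 = V - (V - F2)" using F1V F2V by auto
      ultimately have "F1 = F2" by simp
      then show False using ne by simp
    qed
    moreover have "finite A" unfolding A_def using finV by auto
    moreover have "\<forall>v\<in>A. \<exists>u1 u2. u1 \<noteq> u2 \<and> u1 \<in> A \<and> u2 \<in> A \<and> adj E v u1 \<and> adj E v u2"
    proof
      fix v assume "v \<in> A"
      then consider "v \<in> (V-F1) - (V-F2)" | "v \<in> (V-F2) - (V-F1)" unfolding A_def by blast
      then show "\<exists>u1 u2. u1 \<noteq> u2 \<and> u1 \<in> A \<and> u2 \<in> A \<and> adj E v u1 \<and> adj E v u2"
      proof cases
        case 1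
        then show ?thesis using cross[OF g st[OF m1] d2] unfolding A_def by blast
      next
        case 2
        then show ?thesis using cross[OF g st[OF m2] d1] unfolding A_def by blast
      qed
    qed
    ultimately have "\<exists>xs. is_cycle E xs" using cycle_exists[OF g] by blast
    then show False using nc by blast
  qed
  have "{F. max_dissociation_set V E F} = {F0}" using mF0 uniq by blast
  then show ?thesis unfolding num_max_dissociation_sets_def by simp
qed

end
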